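(* Let $(X,d,\kappa)$ be a digital metric space of positive, finite diameter, where $d$ is any $\ell_p$ metric. Let $f: X \to X$ be a function and let $a,b,c \in \left(0, \frac{1}{3\,\mathrm{diam}\, X}\right)$ be such that $d(f(x),f(y)) \le a\,d(x,f(x)) + b\,d(y,f(y)) + c\,d(x,y)$ for all $x,y \in X$ (i.e., $f$ is a Reich contraction map with these constants). Then $f$ is a constant function.
   Context: A digital metric space is a triple $(X,d,\kappa)$ with $X\subset\mathbb{Z}^n$, $\kappa$ an adjacency relation on $X$, and $d$ a metric on $X$. The $\ell_p$ metric ($1\le p\le\infty$) is $d(x,y) = (\sum_i |x_i-y_i|^p)^{1/p}$ for $p<\infty$ and $\max_i|x_i-y_i|$ for $p=\infty$. $\mathrm{diam}\, X = \max\{d(x,y) : x,y\in X\}$. *)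

theory Defs
  imports "HOL-Analysis.Analysis" "HOL-Library.Extended_Real"
begin

text \<open>The l_p metric on Z^n (points are integer vectors indexed by a finite type 'n);
  the exponent p ranges over [1, \<infinity>] as an extended real.\<close>
definition lp_dist :: "ereal \<Rightarrow> int ^ 'n::finite \<Rightarrow> int ^ 'n \<Rightarrow> real" where
  "lp_dist p x y =
     (if p = \<infinity> then Max (range (\<lambda>i. real_of_int \<bar>x $ i - y $ i\<bar>))
      else (\<Sum>i\<in>UNIV. real_of_int \<bar>x $ i - y $ i\<bar> powr real_of_ereal p) powr (1 / real_of_ereal p))"

definition digital_diam :: "('a \<Rightarrow> 'a \<Rightarrow> real) \<Rightarrow> 'a set \<Rightarrow> real" where
  "digital_diam d X = Sup {d x y | x y. x \<in> X \<and> y \<in> X}"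

end

theory Submission
  imports Defs
begin

lemma lp_nonneg: "0 \<le> lp_dist p x y"
proof (cases "p = \<infinity>")
  case True
  fix i
  have "real_of_int \<bar>x $ i - y $ i\<bar> \<le> Max (range (\<lambda>i. real_of_int \<bar>x $ i - y $ i\<bar>))"
    by (rule Max_ge) auto
  moreover have "0 \<le> real_of_int \<bar>x $ i - y $ i\<bar>" by simp
  moreover have "lp_dist p x y = Max (range (\<lambda>i. real_of_int \<bar>x $ i - y $ i\<bar>))"
    using True by (simp add: lp_dist_def)
  ultimately show ?thesis by linarith
next
  case False
  then show ?thesis unfolding lp_dist_def by simp
qed

lemma lp_ge1:
  assumes "1 \<le> p" "x \<noteq> y"
  shows "1 \<le> lp_dist p x y"
proof -
  obtain i where i: "x $ i \<noteq> y $ i" using assms(2) by (metis vec_eq_iff)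
  hence ge: "1 \<le> real_of_int \<bar>x $ i - y $ i\<bar>" by linarith
  show ?thesis
  proof (cases "p = \<infinity>")
    case True
    have "real_of_int \<bar>x $ i - y $ i\<bar> \<le> Max (range (\<lambda>i. real_of_int \<bar>x $ i - y $ i\<bar>))"
      by (rule Max_ge) auto
    moreover have "lp_dist p x y = Max (range (\<lambda>i. real_of_int \<bar>x $ i - y $ i\<bar>))"
      using True by (simp add: lp_dist_def)
    ultimately show ?thesis using ge by linarith
  next
    case False
    define q where "q = real_of_ereal p"
    have q1: "1 \<le> q" using assms(1) False unfolding q_def
      by (cases p) auto
    have "1 \<le> real_of_int \<bar>x $ i - y $ i\<bar> powr q"
      using ge q1 by (simp add: ge_one_powr_ge_zero)
    also have "\<dots> \<le> (\<Sum>j\<in>UNIV. real_of_int \<bar>x $ j - y $ j\<bar> powr q)"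
      by (rule member_le_sum) auto
    finally have s: "1 \<le> (\<Sum>j\<in>UNIV. real_of_int \<bar>x $ j - y $ j\<bar> powr q)" .
    have "1 \<le> (\<Sum>j\<in>UNIV. real_of_int \<bar>x $ j - y $ j\<bar> powr q) powr (1 / q)"
      using s q1 by (simp add: ge_one_powr_ge_zero)
    then show ?thesis using False unfolding lp_dist_def q_def by simp
  qed
qed

theorem mainTheorem7:
  fixes X :: "(int ^ 'n::finite) set" and p :: ereal
    and f :: "int ^ 'n \<Rightarrow> int ^ 'n" and a b c :: real
  defines "d \<equiv> lp_dist p"
  assumes p: "1 \<le> p"
    and finite_diam: "bdd_above {d x y | x y. x \<in> X \<and> y \<in> X}"
    and pos_diam: "digital_diam d X > 0"
    and f_into: "\<forall>x\<in>X. f x \<in> X"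
    and a: "0 < a" "a < 1 / (3 * digital_diam d X)"
    and b: "0 < b" "b < 1 / (3 * digital_diam d X)"
    and c: "0 < c" "c < 1 / (3 * digital_diam d X)"
    and reich: "\<forall>x\<in>X. \<forall>y\<in>X. d (f x) (f y) \<le> a * d x (f x) + b * d y (f y) + c * d x y"
  shows "\<exists>k. \<forall>x\<in>X. f x = k"
proof (cases "X = {}")
  case True then show ?thesis by simp
next
  case False
  then obtain x0 where x0: "x0 \<in> X" by blast
  define D where "D = digital_diam d X"
  have le: "d x y \<le> D" if "x \<in> X" "y \<in> X" for x y
    unfolding D_def digital_diam_def
    by (rule cSup_upper) (use that finite_diam in auto)
  have D0: "D > 0" using pos_diam D_def by simp
  have aD: "a * D < 1/3" using a D0 unfolding D_def[symmetric] by (simp add: field_simps)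
  have bD: "b * D < 1/3" using b D0 unfolding D_def[symmetric] by (simp add: field_simps)
  have cD: "c * D < 1/3" using c D0 unfolding D_def[symmetric] by (simp add: field_simps)
  have eq: "f x = f y" if "x \<in> X" "y \<in> X" for x y
  proof (rule ccontr)
    assume "f x \<noteq> f y"
    hence "1 \<le> d (f x) (f y)" using lp_ge1[OF p] d_def by simp
    moreover have "a * d x (f x) \<le> a * D" using le[of x "f x"] that f_into a by simp
    moreover have "b * d y (f y) \<le> b * D" using le[of y "f y"] that f_into b by simp
    moreover have "c * d x y \<le> c * D" using le[of x y] that c by simp
    moreover have "d (f x) (f y) \<le> a * d x (f x) + b * d y (f y) + c * d x y"
      using reich that by blast
    ultimately show False using aD bD cD by linarith
  qed
  show ?thesis using eq x0 by blast
qed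

end
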